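(* Let $a_1,\dots,a_n\in\mathbb{F}$ be pairwise non-$(\sigma,\delta)$-conjugate and $r_1,\dots,r_n\in\mathbb{Z}_+$. If $F\in\mathbb{F}[x;\sigma,\delta]$ is non-zero and $(x-a_i)^{r_i}$ divides $F$ on the right for $i=1,\dots,n$, then $$\sum_{i=1}^n r_i\le\deg(F).$$ Furthermore, equality holds if and only if $F=cF_\Omega$ with $c\in\mathbb{F}^*$, where $F_\Omega$ is the monic least left common multiple of $(x-a_1)^{r_1},\dots,(x-a_n)^{r_n}$.
   Context: Let $\mathbb{F}$ be a division ring, $\sigma$ a ring endomorphism of $\mathbb{F}$ and $\delta$ a $\sigma$-derivation; $\mathbb{F}[x;\sigma,\delta]$ is the skew polynomial ring with $xa=\sigma(a)x+\delta(a)$ (a domain with additive degree and right Euclidean division). Elements $a,b\in\mathbb{F}$ are $(\sigma,\delta)$-conjugate if $b=\sigma(\beta)a\beta^{-1}+\delta(\beta)\beta^{-1}$ for some $\beta\in\mathbb{F}^*$. *)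

theory Defs
  imports "HOL-Computational_Algebra.Polynomial"
begin

text \<open>Skew polynomial ring F[x; sigma, delta] over a division ring, represented on the
carrier of ordinary coefficient lists ('a poly): the polynomial sum_i c_i x^i (coefficients
on the left). Only the multiplication is changed, via x a = sigma(a) x + delta(a).\<close>

definition ring_endo :: "('a::division_ring \<Rightarrow> 'a) \<Rightarrow> bool" where
  "ring_endo \<sigma> \<longleftrightarrow> (\<forall>a b. \<sigma> (a + b) = \<sigma> a + \<sigma> b) \<and> (\<forall>a b. \<sigma> (a * b) = \<sigma> a * \<sigma> b) \<and> \<sigma> 1 = 1"

definition sigma_derivation :: "('a::division_ring \<Rightarrow> 'a) \<Rightarrow> ('a \<Rightarrow> 'a) \<Rightarrow> bool" where
  "sigma_derivation \<sigma> \<delta> \<longleftrightarrow> (\<forall>a b. \<delta> (a + b) = \<delta> a + \<delta> b) \<and>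
     (\<forall>a b. \<delta> (a * b) = \<sigma> a * \<delta> b + \<delta> a * b)"

definition skew_xmul :: "('a::division_ring \<Rightarrow> 'a) \<Rightarrow> ('a \<Rightarrow> 'a) \<Rightarrow> 'a poly \<Rightarrow> 'a poly" where
  "skew_xmul \<sigma> \<delta> q = pCons 0 (map_poly \<sigma> q) + map_poly \<delta> q"

definition skew_mult :: "('a::division_ring \<Rightarrow> 'a) \<Rightarrow> ('a \<Rightarrow> 'a) \<Rightarrow> 'a poly \<Rightarrow> 'a poly \<Rightarrow> 'a poly" where
  "skew_mult \<sigma> \<delta> p q = (\<Sum>i\<le>degree p. map_poly (\<lambda>c. coeff p i * c) ((skew_xmul \<sigma> \<delta> ^^ i) q))"

definition skew_pow :: "('a::division_ring \<Rightarrow> 'a) \<Rightarrow> ('a \<Rightarrow> 'a) \<Rightarrow> 'a poly \<Rightarrow> nat \<Rightarrow> 'a poly" where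
  "skew_pow \<sigma> \<delta> p n = ((\<lambda>q. skew_mult \<sigma> \<delta> p q) ^^ n) [:1:]"

definition right_dvd :: "('a::division_ring \<Rightarrow> 'a) \<Rightarrow> ('a \<Rightarrow> 'a) \<Rightarrow> 'a poly \<Rightarrow> 'a poly \<Rightarrow> bool" where
  "right_dvd \<sigma> \<delta> G F \<longleftrightarrow> (\<exists>Q. F = skew_mult \<sigma> \<delta> Q G)"

definition sd_conjugate :: "('a::division_ring \<Rightarrow> 'a) \<Rightarrow> ('a \<Rightarrow> 'a) \<Rightarrow> 'a \<Rightarrow> 'a \<Rightarrow> bool" where
  "sd_conjugate \<sigma> \<delta> a b \<longleftrightarrow>
     (\<exists>\<beta>. \<beta> \<noteq> 0 \<and> b = \<sigma> \<beta> * a * inverse \<beta> + \<delta> \<beta> * inverse \<beta>)"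

definition is_monic_llcm :: "('a::division_ring \<Rightarrow> 'a) \<Rightarrow> ('a \<Rightarrow> 'a) \<Rightarrow> nat set \<Rightarrow> (nat \<Rightarrow> 'a poly) \<Rightarrow> 'a poly \<Rightarrow> bool" where
  "is_monic_llcm \<sigma> \<delta> I P L \<longleftrightarrow> lead_coeff L = 1 \<and> (\<forall>i\<in>I. right_dvd \<sigma> \<delta> (P i) L) \<and>
     (\<forall>G. (\<forall>i\<in>I. right_dvd \<sigma> \<delta> (P i) G) \<longrightarrow> right_dvd \<sigma> \<delta> L G)"

end

theory Submission imports Defs begin

definition cm :: "'a::division_ring \<Rightarrow> 'a poly \<Rightarrow> 'a poly" where "cm c q = map_poly (\<lambda>t. c * t) q"

lemma coeff_cm[simp]: "coeff (cm c q) n = c * coeff q n"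
  unfolding cm_def by (subst coeff_map_poly) auto

lemma skew_mult_cm: "skew_mult \<sigma> \<delta> p q = (\<Sum>i\<le>degree p. cm (coeff p i) ((skew_xmul \<sigma> \<delta> ^^ i) q))"
  by (simp add: skew_mult_def cm_def)

locale skew =
  fixes \<sigma> \<delta> :: "'a::division_ring \<Rightarrow> 'a"
  assumes endo: "ring_endo \<sigma>" and der: "sigma_derivation \<sigma> \<delta>"
begin

lemma s_add: "\<sigma> (a + b) = \<sigma> a + \<sigma> b" using endo by (simp add: ring_endo_def)
lemma s_mult: "\<sigma> (a * b) = \<sigma> a * \<sigma> b" using endo by (simp add: ring_endo_def)
lemma s_1[simp]: "\<sigma> 1 = 1" using endo by (simp add: ring_endo_def)
lemma d_add: "\<delta> (a + b) = \<delta> a + \<delta> b" using der by (simp add: sigma_derivation_def)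
lemma d_mult: "\<delta> (a * b) = \<sigma> a * \<delta> b + \<delta> a * b" using der by (simp add: sigma_derivation_def)
lemma s_0[simp]: "\<sigma> 0 = 0" using s_add[of 0 0] by simp
lemma d_0[simp]: "\<delta> 0 = 0" using d_add[of 0 0] by simp
lemma d_1[simp]: "\<delta> 1 = 0" using d_mult[of 1 1] by simp
lemma s_neg: "\<sigma> (- a) = - \<sigma> a" using s_add[of a "-a"] by (metis add.right_inverse minus_unique s_0)
lemma d_neg: "\<delta> (- a) = - \<delta> a" using d_add[of a "-a"] by (metis add.right_inverse minus_unique d_0)
lemma s_inv: "a \<noteq> 0 \<Longrightarrow> \<sigma> (inverse a) * \<sigma> a = 1"
  by (metis left_inverse s_1 s_mult)
lemma s_nz: "a \<noteq> 0 \<Longrightarrow> \<sigma> a \<noteq> 0" using s_inv by fastforce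
lemma s_funpow_nz: "a \<noteq> 0 \<Longrightarrow> (\<sigma> ^^ k) a \<noteq> 0" by (induct k) (auto simp: s_nz)
lemma s_funpow_1: "(\<sigma> ^^ k) 1 = 1" by (induct k) auto

abbreviation mul (infixl "\<star>" 70) where "p \<star> q \<equiv> skew_mult \<sigma> \<delta> p q"
abbreviation X where "X \<equiv> skew_xmul \<sigma> \<delta>"
abbreviation lin :: "'a \<Rightarrow> 'a poly" where "lin c \<equiv> [:- c, 1:]"
abbreviation rdvd where "rdvd G F \<equiv> right_dvd \<sigma> \<delta> G F"
abbreviation conj where "conj a b \<equiv> sd_conjugate \<sigma> \<delta> a b"


lemma coeff_X0: "coeff (X q) 0 = \<delta> (coeff q 0)"
  by (simp add: skew_xmul_def coeff_map_poly)
lemma coeff_XS: "coeff (X q) (Suc n) = \<sigma> (coeff q n) + \<delta> (coeff q (Suc n))"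
  by (simp add: skew_xmul_def coeff_map_poly)

lemma X_add: "X (p + q) = X p + X q"
proof -
  have "coeff (X (p + q)) n = coeff (X p + X q) n" for n
    by (cases n) (simp_all add: coeff_X0 coeff_XS s_add d_add algebra_simps)
  thus ?thesis by (simp add: poly_eq_iff)
qed
lemma cm_add: "cm c (p + q) = cm c p + cm c q"
  by (simp add: poly_eq_iff distrib_left)
lemma cm_add2: "cm (c + d) p = cm c p + cm d p"
  by (simp add: poly_eq_iff distrib_right)
lemma cm_0[simp]: "cm 0 p = 0" by (simp add: poly_eq_iff)
lemma cm_0r[simp]: "cm c 0 = 0" by (simp add: poly_eq_iff)
lemma cm_1[simp]: "cm 1 p = p" by (simp add: poly_eq_iff)
lemma cm_cm: "cm c (cm d p) = cm (c * d) p" by (simp add: poly_eq_iff mult.assoc)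
lemma X_0[simp]: "X 0 = 0" by (simp add: skew_xmul_def)
lemma Xpow_0[simp]: "(X ^^ i) 0 = 0" by (induct i) auto

lemma X_cm: "X (cm c q) = cm (\<sigma> c) (X q) + cm (\<delta> c) q"
proof -
  have "coeff (X (cm c q)) n = coeff (cm (\<sigma> c) (X q) + cm (\<delta> c) q) n" for n
    by (cases n) (simp_all add: coeff_X0 coeff_XS s_mult d_mult s_add distrib_left algebra_simps)
  thus ?thesis by (simp add: poly_eq_iff)
qed

lemma X_pCons: "X (pCons c q) = pCons (\<delta> c) ([:\<sigma> c:] + X q)"
proof -
  have "coeff (X (pCons c q)) n = coeff (pCons (\<delta> c) ([:\<sigma> c:] + X q)) n" for n
    by (cases n; cases "n - 1") (simp_all add: coeff_X0 coeff_XS)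
  thus ?thesis by (simp add: poly_eq_iff)
qed

lemma X_shift: "X (pCons 0 q) = pCons 0 (X q)"
proof -
  have "coeff (X (pCons 0 q)) n = coeff (pCons 0 (X q)) n" for n
    by (cases n; cases "n - 1") (simp_all add: coeff_X0 coeff_XS)
  thus ?thesis by (simp add: poly_eq_iff)
qed

lemma mul_sum: "degree p \<le> N \<Longrightarrow> p \<star> q = (\<Sum>i\<le>N. cm (coeff p i) ((X ^^ i) q))"
proof -
  assume "degree p \<le> N"
  hence "(\<Sum>i\<le>N. cm (coeff p i) ((X ^^ i) q)) = (\<Sum>i\<le>degree p. cm (coeff p i) ((X ^^ i) q))"
    by (intro sum.mono_neutral_right) (auto simp: coeff_eq_0)
  thus ?thesis by (simp add: skew_mult_cm)
qed

lemma mul_pCons: "pCons c p \<star> q = cm c q + p \<star> X q"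
proof -
  have "pCons c p \<star> q = (\<Sum>i\<le>Suc (degree p). cm (coeff (pCons c p) i) ((X ^^ i) q))"
    by (rule mul_sum) simp
  also have "\<dots> = cm c q + (\<Sum>i\<le>degree p. cm (coeff p i) ((X ^^ i) (X q)))"
    by (subst sum.atMost_Suc_shift) (simp add: funpow_Suc_right del: funpow.simps)
  also have "\<dots> = cm c q + p \<star> X q" by (simp add: skew_mult_cm)
  finally show ?thesis .
qed

lemma mul_0_left[simp]: "0 \<star> q = 0" by (simp add: skew_mult_cm)
lemma mul_const: "[:c:] \<star> q = cm c q" using mul_pCons[of c 0 q] by simp

lemma mul_0_right[simp]: "p \<star> 0 = 0"
  by (induct p) (auto simp: mul_pCons)

lemma mul_add_right: "p \<star> (q + r) = p \<star> q + p \<star> r"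
  by (induct p arbitrary: q r) (simp_all add: mul_pCons X_add cm_add algebra_simps)

lemma mul_add_left: "(p + p') \<star> q = p \<star> q + p' \<star> q"
proof -
  let ?N = "max (degree p) (degree p')"
  have "(p + p') \<star> q = (\<Sum>i\<le>?N. cm (coeff (p + p') i) ((X ^^ i) q))"
    by (rule mul_sum) (simp add: degree_add_le)
  also have "\<dots> = (\<Sum>i\<le>?N. cm (coeff p i) ((X ^^ i) q)) + (\<Sum>i\<le>?N. cm (coeff p' i) ((X ^^ i) q))"
    by (simp add: cm_add2 sum.distrib)
  also have "\<dots> = p \<star> q + p' \<star> q" by (simp add: mul_sum[symmetric])
  finally show ?thesis .
qed

lemma mul_neg_left: "(- p) \<star> q = - (p \<star> q)"
  using mul_add_left[of p "-p" q] by (metis add.right_inverse minus_unique mul_0_left)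
lemma mul_neg_right: "p \<star> (- q) = - (p \<star> q)"
  using mul_add_right[of p q "-q"] by (metis add.right_inverse minus_unique mul_0_right)
lemma mul_diff_left: "(p - p') \<star> q = p \<star> q - p' \<star> q"
  using mul_add_left[of p "-p'" q] by (simp add: mul_neg_left)
lemma mul_diff_right: "p \<star> (q - q') = p \<star> q - p \<star> q'"
  using mul_add_right[of p q "-q'"] by (simp add: mul_neg_right)

lemma cm_sum: "cm c (\<Sum>i\<in>A. f i) = (\<Sum>i\<in>A. cm c (f i))"
  by (simp add: poly_eq_iff coeff_sum sum_distrib_left)

lemma degree_cm_le: "degree (cm c p) \<le> degree p"
  by (rule degree_le) (simp add: coeff_eq_0)

lemma mul_cm_left: "cm c p \<star> q = cm c (p \<star> q)"
proof -
  have "cm c p \<star> q = (\<Sum>i\<le>degree p. cm (coeff (cm c p) i) ((X ^^ i) q))"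
    by (rule mul_sum) (rule degree_cm_le)
  also have "\<dots> = cm c (p \<star> q)" by (simp add: mul_sum[of p "degree p"] cm_sum cm_cm)
  finally show ?thesis .
qed

lemma mul_X_left: "X q \<star> r = X (q \<star> r)"
proof (induct q arbitrary: r)
  case 0 thus ?case by simp
next
  case (pCons c q)
  have "X (pCons c q) \<star> r = cm (\<delta> c) r + ([:\<sigma> c:] + X q) \<star> X r"
    by (simp add: X_pCons mul_pCons)
  also have "\<dots> = cm (\<delta> c) r + cm (\<sigma> c) (X r) + X (q \<star> X r)"
    by (simp add: mul_add_left mul_const pCons add.assoc)
  also have "\<dots> = X (pCons c q \<star> r)"
    by (simp add: mul_pCons X_add X_cm algebra_simps)
  finally show ?case .
qed

lemma mul_assoc: "(p \<star> q) \<star> r = p \<star> (q \<star> r)"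
proof (induct p arbitrary: q)
  case 0 thus ?case by simp
next
  case (pCons c p)
  show ?case by (simp add: mul_pCons mul_add_left mul_cm_left pCons mul_X_left)
qed

lemma cm_shift: "cm c (pCons 0 q) = pCons 0 (cm c q)"
  by (simp add: poly_eq_iff coeff_pCons split: nat.split)

lemma mul_shift: "p \<star> pCons 0 q = pCons 0 (p \<star> q)"
  by (induct p arbitrary: q) (simp_all add: mul_pCons X_shift cm_shift)

lemma mul_1_left[simp]: "[:1:] \<star> q = q" by (simp add: mul_const)

lemma mul_1_right[simp]: "p \<star> [:1:] = p"
proof (induct p)
  case 0 thus ?case by simp
next
  case (pCons c p)
  have X1: "X [:1:] = pCons 0 [:1:]" by (simp add: X_pCons)
  have "cm c [:1:] = [:c:]" by (simp add: poly_eq_iff coeff_pCons split: nat.split)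
  moreover have "pCons c p = [:c:] + pCons 0 p" by (simp add: poly_eq_iff coeff_pCons split: nat.split)
  ultimately show ?case by (simp add: mul_pCons X1 mul_shift pCons)
qed

lemma degree_X: assumes "q \<noteq> 0"
  shows "degree (X q) = Suc (degree q) \<and> coeff (X q) (Suc (degree q)) = \<sigma> (lead_coeff q)"
proof -
  have c: "coeff (X q) (Suc (degree q)) = \<sigma> (lead_coeff q)"
    by (simp add: coeff_XS coeff_eq_0)
  hence "coeff (X q) (Suc (degree q)) \<noteq> 0" using assms s_nz by simp
  hence "Suc (degree q) \<le> degree (X q)" by (rule le_degree)
  moreover have "degree (X q) \<le> Suc (degree q)"
  proof (rule degree_le, intro allI impI)
    fix n assume "Suc (degree q) < n"
    then obtain m where "n = Suc m" "degree q < m" by (cases n) auto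
    thus "coeff (X q) n = 0" by (simp add: coeff_XS coeff_eq_0)
  qed
  ultimately show ?thesis using c by simp
qed

lemma degree_cm: assumes "c \<noteq> 0"
  shows "degree (cm c q) = degree q"
proof (cases "q = 0")
  case False
  hence "coeff (cm c q) (degree q) \<noteq> 0" using assms by simp
  hence "degree q \<le> degree (cm c q)" by (rule le_degree)
  thus ?thesis using degree_cm_le[of c q] by simp
qed simp

lemma degree_mul_aux: "p \<noteq> 0 \<Longrightarrow> q \<noteq> 0 \<Longrightarrow>
  degree (p \<star> q) = degree p + degree q \<and>
  coeff (p \<star> q) (degree p + degree q) = lead_coeff p * (\<sigma> ^^ degree p) (lead_coeff q)"
proof (induct p arbitrary: q)
  case 0 thus ?case by simp
next
  case (pCons c p)
  show ?case
  proof (cases "p = 0")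
    case True
    hence "c \<noteq> 0" using pCons by simp
    thus ?thesis using True by (simp add: mul_pCons degree_cm)
  next
    case False
    have Xq: "X q \<noteq> 0" using degree_X[OF pCons(4)] by auto
    from pCons(2)[OF False Xq] degree_X[OF pCons(4)]
    have IH: "degree (p \<star> X q) = degree p + Suc (degree q)"
      "coeff (p \<star> X q) (degree p + Suc (degree q)) = lead_coeff p * (\<sigma> ^^ degree p) (\<sigma> (lead_coeff q))"
      by auto
    have lt: "degree (cm c q) < degree (p \<star> X q)" using IH(1) degree_cm_le[of c q] by simp
    have "degree (pCons c p \<star> q) = degree (p \<star> X q)"
      unfolding mul_pCons by (rule degree_add_eq_right[OF lt])
    moreover have "coeff (pCons c p \<star> q) (degree p + Suc (degree q)) =
       coeff (p \<star> X q) (degree p + Suc (degree q))"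
      unfolding mul_pCons using lt IH(1) by (simp add: coeff_eq_0)
    ultimately show ?thesis using IH False
      by (simp add: funpow_Suc_right del: funpow.simps)
  qed
qed

lemma degree_mul: "p \<noteq> 0 \<Longrightarrow> q \<noteq> 0 \<Longrightarrow> degree (p \<star> q) = degree p + degree q"
  using degree_mul_aux by blast

lemma mul_eq_0_iff: "p \<star> q = 0 \<longleftrightarrow> p = 0 \<or> q = 0"
proof (cases "p = 0 \<or> q = 0")
  case False
  hence "coeff (p \<star> q) (degree p + degree q) \<noteq> 0"
    using degree_mul_aux[of p q] s_funpow_nz[of "lead_coeff q" "degree p"] by auto
  thus ?thesis using False by auto
qed auto

lemma lead_coeff_mul_monic: "lead_coeff q = 1 \<Longrightarrow> p \<noteq> 0 \<Longrightarrow> lead_coeff (p \<star> q) = lead_coeff p"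
  using degree_mul_aux[of p q] s_funpow_1 by (cases "q = 0") auto

lemma mul_cancel_right: "A \<star> C = B \<star> C \<Longrightarrow> C \<noteq> 0 \<Longrightarrow> A = B"
  using mul_diff_left[of A B C] mul_eq_0_iff[of "A - B" C] by simp

lemma degree_diff_lead: fixes p q :: "'a poly" assumes "degree p = degree q" "lead_coeff p = lead_coeff q" "p - q \<noteq> 0"
  shows "degree (p - q) < degree p"
proof -
  have le: "degree (p - q) \<le> degree p" using assms(1) degree_diff_le[of p "degree p" q] by simp
  have "coeff (p - q) (degree p) = 0" using assms(1,2) by simp
  moreover have "coeff (p - q) (degree (p - q)) \<noteq> 0" using assms(3) leading_coeff_0_iff by blast
  ultimately have "degree (p - q) \<noteq> degree p" by metis
  thus ?thesis using le by simp
qed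

lemma div_monic: assumes L: "lead_coeff L = 1"
  shows "\<exists>Q R. G = Q \<star> L + R \<and> (R = 0 \<or> degree R < degree L)"
proof (induct G rule: measure_induct_rule[where f = degree])
  case (less G)
  show ?case
  proof (cases "G = 0 \<or> degree G < degree L")
    case True thus ?thesis by (rule_tac x=0 in exI, rule_tac x=G in exI) auto
  next
    case False
    hence G0: "G \<noteq> 0" and dG: "degree L \<le> degree G" by auto
    define k where "k = degree G - degree L"
    define T where "T = monom (lead_coeff G) k"
    have T0: "T \<noteq> 0" using G0 by (simp add: T_def)
    have L0: "L \<noteq> 0" using L by auto
    have dT: "degree T = k" using G0 by (simp add: T_def degree_monom_eq)
    have dTL: "degree (T \<star> L) = degree G" using degree_mul[OF T0 L0] dT dG k_def by simp
    have lTL: "lead_coeff (T \<star> L) = lead_coeff G"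
      using lead_coeff_mul_monic[OF L T0] dT by (simp add: T_def)
    show ?thesis
    proof (cases "G - T \<star> L = 0")
      case True
      thus ?thesis by (rule_tac x=T in exI, rule_tac x=0 in exI) simp
    next
      case False
      have "degree (G - T \<star> L) < degree G"
        using degree_diff_lead[OF dTL[symmetric] lTL[symmetric] False] .
      from less[OF this] obtain Q R where QR: "G - T \<star> L = Q \<star> L + R" "R = 0 \<or> degree R < degree L"
        by blast
      hence "G = (T + Q) \<star> L + R" by (simp add: mul_add_left algebra_simps)
      thus ?thesis using QR(2) by blast
    qed
  qed
qed

lemma div_lin: "\<exists>W k. Q = W \<star> lin c + [:k:]"
proof -
  obtain W R where WR: "Q = W \<star> lin c + R" "R = 0 \<or> degree R < degree (lin c)"
    using div_monic[of "lin c" Q] by auto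
  hence "degree R = 0" by auto
  then obtain k where "R = [:k:]" by (elim degree_eq_zeroE) 
  thus ?thesis using WR by blast
qed

definition cnj :: "'a \<Rightarrow> 'a \<Rightarrow> 'a" where
  "cnj c e = \<sigma> e * c * inverse e + \<delta> e * inverse e"

lemma cnj_mult: "e \<noteq> 0 \<Longrightarrow> cnj c e * e = \<sigma> e * c + \<delta> e"
  by (simp add: cnj_def distrib_right mult.assoc)

lemma lin_const: assumes "e \<noteq> 0" shows "lin (cnj c e) \<star> [:e:] = [:\<sigma> e:] \<star> lin c"
proof -
  have X: "X [:e:] = [:\<delta> e, \<sigma> e:]" by (simp add: X_pCons)
  have "lin (cnj c e) \<star> [:e:] = cm (- cnj c e) [:e:] + [:\<delta> e, \<sigma> e:]"
    by (simp add: mul_pCons X)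
  also have "\<dots> = [:\<sigma> e * (- c), \<sigma> e:]"
    using cnj_mult[OF assms, of c] by (simp add: poly_eq_iff coeff_pCons split: nat.split)
  also have "\<dots> = [:\<sigma> e:] \<star> lin c" by (simp add: mul_const poly_eq_iff coeff_pCons split: nat.split)
  finally show ?thesis .
qed

lemma lin_split: "lin a = lin c + [:c - a:]" by simp

lemma conj_iff: "conj a b \<longleftrightarrow> (\<exists>\<beta>. \<beta> \<noteq> 0 \<and> b = cnj a \<beta>)"
  by (simp add: sd_conjugate_def cnj_def)

lemma cnj_1: "cnj a 1 = a" by (simp add: cnj_def)

lemma cnj_cnj: assumes "\<beta> \<noteq> 0" "\<gamma> \<noteq> 0" shows "cnj (cnj a \<beta>) \<gamma> = cnj a (\<gamma> * \<beta>)"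
proof -
  have inv: "inverse (\<gamma> * \<beta>) = inverse \<beta> * inverse \<gamma>"
    using assms by (simp add: nonzero_inverse_mult_distrib)
  have bb: "\<beta> * inverse \<beta> = 1" using assms by simp
  have "cnj a (\<gamma> * \<beta>) = \<sigma> \<gamma> * \<sigma> \<beta> * a * (inverse \<beta> * inverse \<gamma>)
      + (\<sigma> \<gamma> * \<delta> \<beta> + \<delta> \<gamma> * \<beta>) * (inverse \<beta> * inverse \<gamma>)"
    by (simp add: cnj_def s_mult d_mult inv)
  also have "\<dots> = \<sigma> \<gamma> * (\<sigma> \<beta> * a * inverse \<beta>) * inverse \<gamma>
      + \<sigma> \<gamma> * (\<delta> \<beta> * inverse \<beta>) * inverse \<gamma> + \<delta> \<gamma> * (\<beta> * inverse \<beta>) * inverse \<gamma>"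
    by (simp add: algebra_simps)
  also have "\<dots> = cnj (cnj a \<beta>) \<gamma>" by (simp add: bb cnj_def algebra_simps)
  finally show ?thesis by simp
qed

lemma conj_refl: "conj a a" using conj_iff cnj_1 by (metis one_neq_zero)

lemma conj_trans: "conj a b \<Longrightarrow> conj b c \<Longrightarrow> conj a c"
  unfolding conj_iff using cnj_cnj by (metis no_zero_divisors)

lemma conj_sym: assumes "conj a b" shows "conj b a"
proof -
  obtain \<beta> where b: "\<beta> \<noteq> 0" "b = cnj a \<beta>" using assms conj_iff by auto
  have "cnj b (inverse \<beta>) = a" using b cnj_cnj[of \<beta> "inverse \<beta>" a] by (simp add: cnj_1)
  thus ?thesis using b conj_iff by (metis inverse_nonzero_iff_nonzero)
qed

lemma conj_cnj: "e \<noteq> 0 \<Longrightarrow> conj c (cnj c e)" using conj_iff by blast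

lemma cnj_shift: assumes "e \<noteq> 0" shows "cnj c e - \<sigma> e = cnj (c - e) e"
  using assms by (simp add: cnj_def algebra_simps mult.assoc)

lemma lin_swap: assumes "c \<noteq> a"
  shows "lin (cnj c (c - a)) \<star> lin a = lin (cnj a (c - a)) \<star> lin c"
proof -
  define e where "e = c - a"
  have e: "e \<noteq> 0" using assms by (simp add: e_def)
  have "lin (cnj c e) \<star> lin a = lin (cnj c e) \<star> lin c + lin (cnj c e) \<star> [:e:]"
    by (simp add: e_def mul_add_right[symmetric])
  also have "\<dots> = (lin (cnj c e) + [:\<sigma> e:]) \<star> lin c" by (simp only: lin_const[OF e] mul_add_left)
  also have "lin (cnj c e) + [:\<sigma> e:] = lin (cnj c e - \<sigma> e)" by simp
  also have "cnj c e - \<sigma> e = cnj a e" using cnj_shift[OF e, of c] by (simp add: e_def)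
  finally show ?thesis by (simp add: e_def)
qed

lemma rt: assumes "c \<noteq> a" "rdvd (lin c) (Q \<star> lin a)"
  shows "\<exists>W. Q = W \<star> lin (cnj c (c - a))"
proof -
  define e where "e = c - a"
  have e: "e \<noteq> 0" using assms by (simp add: e_def)
  obtain W k where Wk: "Q = W \<star> lin (cnj c e) + [:k:]" using div_lin by blast
  obtain T where T: "Q \<star> lin a = T \<star> lin c" using assms(2) by (auto simp: right_dvd_def)
  have sw: "lin (cnj c e) \<star> lin a = lin (cnj a e) \<star> lin c" using lin_swap[OF assms(1)] by (simp add: e_def)
  have la: "lin a = lin c + [:e:]" by (simp add: e_def)
  have ke: "[:k:] \<star> [:e:] = [:k * e:]" by (simp add: mul_const poly_eq_iff coeff_pCons split: nat.split)
  have "Q \<star> lin a = W \<star> (lin (cnj c e) \<star> lin a) + [:k:] \<star> (lin c + [:e:])"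
    by (simp only: Wk mul_add_left mul_assoc la)
  also have "\<dots> = (W \<star> lin (cnj a e) + [:k:]) \<star> lin c + [:k * e:]"
    by (simp only: sw mul_assoc mul_add_right mul_add_left ke add.assoc)
  finally have "(T - (W \<star> lin (cnj a e) + [:k:])) \<star> lin c = [:k * e:]"
    using T by (simp add: mul_diff_left algebra_simps)
  moreover
  { assume D: "T - (W \<star> lin (cnj a e) + [:k:]) \<noteq> 0"
    have "degree ((T - (W \<star> lin (cnj a e) + [:k:])) \<star> lin c) \<ge> 1"
      using degree_mul[OF D, of "lin c"] by simp
    hence False using calculation by simp }
  ultimately have "[:k * e:] = 0" by fastforce
  hence "k = 0" using e by simp
  thus ?thesis using Wk by (auto simp: e_def)
qed

inductive cprod :: "'a \<Rightarrow> nat \<Rightarrow> 'a poly \<Rightarrow> bool" where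
  c0: "cprod b 0 [:1:]"
| cS: "cprod b s P \<Longrightarrow> conj b c \<Longrightarrow> cprod b (Suc s) (P \<star> lin c)"

lemma claimT: "cprod b s P \<Longrightarrow> rdvd P (Q \<star> lin a) \<Longrightarrow> \<not> conj b a \<Longrightarrow>
   \<exists>P'. cprod b s P' \<and> rdvd P' Q"
proof (induct arbitrary: Q a rule: cprod.induct)
  case (c0 b)
  thus ?case by (rule_tac x="[:1:]" in exI) (auto simp: right_dvd_def intro: cprod.c0)
next
  case (cS b s P c)
  obtain T where T: "Q \<star> lin a = T \<star> (P \<star> lin c)" using cS(4) by (auto simp: right_dvd_def)
  have ca: "c \<noteq> a" using cS(3,5) by auto
  define e where "e = c - a"
  have e: "e \<noteq> 0" using ca by (simp add: e_def)
  have "rdvd (lin c) (Q \<star> lin a)" using T by (auto simp: right_dvd_def mul_assoc[symmetric])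
  then obtain W where W: "Q = W \<star> lin (cnj c e)" using rt[OF ca] by (auto simp: e_def)
  have "(W \<star> lin (cnj a e)) \<star> lin c = (T \<star> P) \<star> lin c"
    using T W lin_swap[OF ca] by (simp add: mul_assoc e_def)
  hence "W \<star> lin (cnj a e) = T \<star> P" by (rule mul_cancel_right) simp
  hence r: "rdvd P (W \<star> lin (cnj a e))" by (auto simp: right_dvd_def)
  have "\<not> conj b (cnj a e)"
    using cS(5) conj_cnj[OF e, of a] conj_sym conj_trans by blast
  from cS(2)[OF r this] obtain P1 where P1: "cprod b s P1" "rdvd P1 W" by blast
  then obtain U where U: "W = U \<star> P1" by (auto simp: right_dvd_def)
  have "conj b (cnj c e)" using cS(3) conj_cnj[OF e, of c] conj_trans by blast
  hence "cprod b (Suc s) (P1 \<star> lin (cnj c e))" using cprod.cS[OF P1(1)] by blast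
  moreover have "rdvd (P1 \<star> lin (cnj c e)) Q" using W U by (auto simp: right_dvd_def mul_assoc)
  ultimately show ?case by blast
qed

lemma count_aux: "finite I \<Longrightarrow> \<forall>s P F. sum s I = N \<longrightarrow>
   (\<forall>i\<in>I. cprod (b i) (s i) (P i) \<and> rdvd (P i) F) \<longrightarrow>
   (\<forall>i\<in>I. \<forall>j\<in>I. i \<noteq> j \<longrightarrow> \<not> conj (b i) (b j)) \<longrightarrow> F \<noteq> 0 \<longrightarrow> N \<le> degree F"
proof (induct N)
  case 0 thus ?case by simp
next
  case (Suc m)
  show ?case
  proof (intro allI impI)
    fix s P F
    assume sum: "sum s I = Suc m" and H: "\<forall>i\<in>I. cprod (b i) (s i) (P i) \<and> rdvd (P i) F"
      and NC: "\<forall>i\<in>I. \<forall>j\<in>I. i \<noteq> j \<longrightarrow> \<not> conj (b i) (b j)" and F0: "F \<noteq> 0"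
    obtain j where j: "j \<in> I" "s j \<noteq> 0" using sum by (metis sum.neutral nat.simps(3))
    then obtain t where t: "s j = Suc t" by (cases "s j") auto
    from H j have "cprod (b j) (Suc t) (P j)" using t by auto
    then obtain P0 c where P0: "P j = P0 \<star> lin c" "cprod (b j) t P0" "conj (b j) c"
      by (cases rule: cprod.cases) auto
    obtain T where T: "F = T \<star> P j" using H j by (auto simp: right_dvd_def)
    define Q where "Q = T \<star> P0"
    have FQ: "F = Q \<star> lin c" using T P0 by (simp add: Q_def mul_assoc)
    have Q0: "Q \<noteq> 0" using F0 FQ by auto
    have dF: "degree F = degree Q + 1" using FQ degree_mul[OF Q0, of "lin c"] by simp
    have "\<forall>i\<in>I - {j}. \<exists>P'. cprod (b i) (s i) P' \<and> rdvd P' Q"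
    proof
      fix i assume i: "i \<in> I - {j}"
      have "\<not> conj (b i) c" using NC i j P0(3) conj_sym conj_trans by blast
      thus "\<exists>P'. cprod (b i) (s i) P' \<and> rdvd P' Q" using H i FQ claimT by auto
    qed
    then obtain Pf where Pf: "\<forall>i\<in>I - {j}. cprod (b i) (s i) (Pf i) \<and> rdvd (Pf i) Q"
      by metis
    define s' where "s' = s(j := t)"
    define P' where "P' = Pf(j := P0)"
    have "sum s I = s j + sum s (I - {j})" using Suc(2) j by (simp add: sum.remove)
    moreover have "sum s' I = s' j + sum s' (I - {j})" using Suc(2) j by (simp add: sum.remove)
    moreover have "sum s' (I - {j}) = sum s (I - {j})" by (rule sum.cong) (auto simp: s'_def)
    ultimately have "sum s' I = m" using sum t by (simp add: s'_def)
    moreover have "\<forall>i\<in>I. cprod (b i) (s' i) (P' i) \<and> rdvd (P' i) Q"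
      using Pf P0 t by (auto simp: s'_def P'_def Q_def right_dvd_def)
    ultimately have "m \<le> degree Q" using Suc(1)[OF Suc(2)] NC Q0 by blast
    thus "Suc m \<le> degree F" using dF by simp
  qed
qed

lemma count: "finite I \<Longrightarrow> \<forall>i\<in>I. cprod (b i) (s i) (P i) \<and> rdvd (P i) F \<Longrightarrow>
   \<forall>i\<in>I. \<forall>j\<in>I. i \<noteq> j \<longrightarrow> \<not> conj (b i) (b j) \<Longrightarrow> F \<noteq> 0 \<Longrightarrow> sum s I \<le> degree F"
  using count_aux by blast

lemma pow_Suc: "skew_pow \<sigma> \<delta> p (Suc n) = p \<star> skew_pow \<sigma> \<delta> p n"
  by (simp add: skew_pow_def)
lemma pow_0: "skew_pow \<sigma> \<delta> p 0 = [:1:]"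
  by (simp add: skew_pow_def)
lemma pow_Suc': "skew_pow \<sigma> \<delta> p (Suc n) = skew_pow \<sigma> \<delta> p n \<star> p"
  by (induct n) (simp_all add: pow_Suc pow_0 mul_assoc[symmetric])

lemma pow_cprod: "cprod a r (skew_pow \<sigma> \<delta> (lin a) r)"
  by (induct r) (auto simp: pow_0 pow_Suc' intro: cprod.intros conj_refl)

lemma ore1: "\<exists>w. w \<noteq> 0 \<and> degree w \<le> 1 \<and> rdvd (lin b) (w \<star> f)"
proof -
  obtain q k where qk: "f = q \<star> lin b + [:k:]" using div_lin by blast
  show ?thesis
  proof (cases "k = 0")
    case True
    thus ?thesis using qk by (rule_tac x="[:1:]" in exI) (auto simp: right_dvd_def)
  next
    case False
    define w where "w = lin (cnj b k)"
    have "w \<star> f = (w \<star> q + [:\<sigma> k:]) \<star> lin b"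
      by (simp only: qk mul_add_right mul_add_left mul_assoc w_def lin_const[OF False])
    moreover have "w \<noteq> 0" "degree w \<le> 1" by (auto simp: w_def)
    ultimately show ?thesis by (auto simp: right_dvd_def)
  qed
qed

lemma ore2: "\<exists>u. u \<noteq> 0 \<and> degree u \<le> r \<and> rdvd (skew_pow \<sigma> \<delta> (lin b) r) (u \<star> f)"
proof (induct r)
  case 0 thus ?case by (rule_tac x="[:1:]" in exI) (auto simp: right_dvd_def pow_0)
next
  case (Suc r)
  then obtain u v where uv: "u \<noteq> 0" "degree u \<le> r" "u \<star> f = v \<star> skew_pow \<sigma> \<delta> (lin b) r"
    by (auto simp: right_dvd_def)
  obtain w t where wt: "w \<noteq> 0" "degree w \<le> 1" "w \<star> v = t \<star> lin b"
    using ore1[of b v] by (auto simp: right_dvd_def)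
  have "(w \<star> u) \<star> f = t \<star> skew_pow \<sigma> \<delta> (lin b) (Suc r)"
    by (simp add: mul_assoc uv(3) pow_Suc) (simp add: mul_assoc[symmetric] wt(3))
  moreover have "w \<star> u \<noteq> 0" using wt uv by (simp add: mul_eq_0_iff)
  moreover have "degree (w \<star> u) \<le> Suc r" using wt uv degree_mul[of w u] by simp
  ultimately show ?case by (auto simp: right_dvd_def)
qed

lemma common: fixes n :: nat and a :: "nat \<Rightarrow> 'a" and r :: "nat \<Rightarrow> nat" shows "\<exists>m. m \<noteq> 0 \<and> degree m \<le> (\<Sum>i=1..n. r i) \<and>
   (\<forall>i\<in>{1..n}. rdvd (skew_pow \<sigma> \<delta> (lin (a i)) (r i)) m)"
proof (induct n)
  case 0 thus ?case by (rule_tac x="[:1:]" in exI) auto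
next
  case (Suc n)
  then obtain m where m: "m \<noteq> 0" "degree m \<le> (\<Sum>i=1..n. r i)"
    "\<forall>i\<in>{1..n}. rdvd (skew_pow \<sigma> \<delta> (lin (a i)) (r i)) m" by blast
  obtain u where u: "u \<noteq> 0" "degree u \<le> r (Suc n)"
    "rdvd (skew_pow \<sigma> \<delta> (lin (a (Suc n))) (r (Suc n))) (u \<star> m)"
    using ore2 by blast
  have "u \<star> m \<noteq> 0" using u m by (simp add: mul_eq_0_iff)
  moreover have "degree (u \<star> m) \<le> (\<Sum>i=1..Suc n. r i)" using degree_mul[of u m] u m by simp
  moreover have "\<forall>i\<in>{1..Suc n}. rdvd (skew_pow \<sigma> \<delta> (lin (a i)) (r i)) (u \<star> m)"
  proof
    fix i assume i: "i \<in> {1..Suc n}"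
    show "rdvd (skew_pow \<sigma> \<delta> (lin (a i)) (r i)) (u \<star> m)"
    proof (cases "i = Suc n")
      case True thus ?thesis using u by simp
    next
      case False
      hence "i \<in> {1..n}" using i by auto
      then obtain Q where "m = Q \<star> skew_pow \<sigma> \<delta> (lin (a i)) (r i)" using m unfolding right_dvd_def by blast
      thus ?thesis unfolding right_dvd_def by (metis mul_assoc)
    qed
  qed
  ultimately show ?case by blast
qed

lemma llcm_ex: assumes "\<exists>m. m \<noteq> 0 \<and> (\<forall>i\<in>I. rdvd (P i) m)"
  shows "\<exists>L. is_monic_llcm \<sigma> \<delta> I P L"
proof -
  let ?S = "\<lambda>m. m \<noteq> 0 \<and> (\<forall>i\<in>I. rdvd (P i) m)"
  obtain G0 where G0: "?S G0" "\<forall>y. ?S y \<longrightarrow> degree G0 \<le> degree y"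
    using assms ex_has_least_nat[of ?S _ degree] by blast
  define c where "c = inverse (lead_coeff G0)"
  have c0: "c \<noteq> 0" using G0 by (simp add: c_def)
  define L where "L = [:c:] \<star> G0"
  have dL: "degree L = degree G0" by (simp add: L_def mul_const degree_cm[OF c0])
  have lL: "lead_coeff L = 1" using G0 by (simp add: dL) (simp add: L_def mul_const c_def)
  have dv: "\<forall>i\<in>I. rdvd (P i) L"
    using G0 unfolding right_dvd_def L_def by (metis mul_assoc)
  have "rdvd L G" if G: "\<forall>i\<in>I. rdvd (P i) G" for G
  proof -
    obtain Q R where QR: "G = Q \<star> L + R" "R = 0 \<or> degree R < degree L" using div_monic[OF lL] by blast
    have "\<forall>i\<in>I. rdvd (P i) R"
    proof
      fix i assume i: "i \<in> I"
      obtain A B where "G = A \<star> P i" "L = B \<star> P i" using G dv i unfolding right_dvd_def by meson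
      hence "R = (A - Q \<star> B) \<star> P i" using QR(1) by (simp add: mul_diff_left mul_assoc algebra_simps)
      thus "rdvd (P i) R" by (auto simp: right_dvd_def)
    qed
    hence "R = 0" using G0(2) QR(2) dL by force
    thus ?thesis using QR by (auto simp: right_dvd_def)
  qed
  thus ?thesis using lL dv by (auto simp: is_monic_llcm_def)
qed

end

theorem mainTheorem8:
  fixes \<sigma> \<delta> :: "'a::division_ring \<Rightarrow> 'a" and n :: nat and a :: "nat \<Rightarrow> 'a"
    and r :: "nat \<Rightarrow> nat" and F :: "'a poly"
  assumes "ring_endo \<sigma>" and "sigma_derivation \<sigma> \<delta>"
    and "\<forall>i\<in>{1..n}. \<forall>j\<in>{1..n}. i \<noteq> j \<longrightarrow> \<not> sd_conjugate \<sigma> \<delta> (a i) (a j)"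
    and "\<forall>i\<in>{1..n}. r i > 0"
    and "F \<noteq> 0"
    and "\<forall>i\<in>{1..n}. right_dvd \<sigma> \<delta> (skew_pow \<sigma> \<delta> [:- a i, 1:] (r i)) F"
  shows "(\<Sum>i=1..n. r i) \<le> degree F \<and>
    (\<exists>L. is_monic_llcm \<sigma> \<delta> {1..n} (\<lambda>i. skew_pow \<sigma> \<delta> [:- a i, 1:] (r i)) L) \<and>
    (\<forall>L. is_monic_llcm \<sigma> \<delta> {1..n} (\<lambda>i. skew_pow \<sigma> \<delta> [:- a i, 1:] (r i)) L \<longrightarrow>
       ((\<Sum>i=1..n. r i) = degree F \<longleftrightarrow> (\<exists>c. c \<noteq> 0 \<and> F = skew_mult \<sigma> \<delta> [:c:] L)))"
proof -
  interpret skew \<sigma> \<delta> using assms(1,2) by unfold_locales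
  define P where "P i = skew_pow \<sigma> \<delta> [:- a i, 1:] (r i)" for i
  have cnt: "(\<Sum>i=1..n. r i) \<le> degree G" if "G \<noteq> 0" "\<forall>i\<in>{1..n}. rdvd (P i) G" for G
    using count[of "{1..n}" a r P G] that assms(3) pow_cprod by (auto simp: P_def)
  obtain m where m: "m \<noteq> 0" "degree m \<le> (\<Sum>i=1..n. r i)" "\<forall>i\<in>{1..n}. rdvd (P i) m"
    using common[where n=n and a=a and r=r] by (auto simp: P_def)
  have part1: "(\<Sum>i=1..n. r i) \<le> degree F" using cnt assms(5,6) by (simp add: P_def)
  have part2: "\<exists>L. is_monic_llcm \<sigma> \<delta> {1..n} P L" using llcm_ex m by blast
  have part3: "((\<Sum>i=1..n. r i) = degree F \<longleftrightarrow> (\<exists>c. c \<noteq> 0 \<and> F = [:c:] \<star> L))"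
    if L: "is_monic_llcm \<sigma> \<delta> {1..n} P L" for L
  proof -
    have lL: "lead_coeff L = 1" and dv: "\<forall>i\<in>{1..n}. rdvd (P i) L"
      and un: "\<And>G. \<forall>i\<in>{1..n}. rdvd (P i) G \<Longrightarrow> rdvd L G"
      using L by (auto simp: is_monic_llcm_def)
    have L0: "L \<noteq> 0" using lL by auto
    obtain Q where Q: "m = Q \<star> L" using un[OF m(3)] by (auto simp: right_dvd_def)
    have "Q \<noteq> 0" using Q m(1) by auto
    hence "degree L \<le> degree m" using Q degree_mul[of Q L] L0 by simp
    moreover have "(\<Sum>i=1..n. r i) \<le> degree L" using cnt[OF L0 dv] .
    ultimately have dL: "degree L = (\<Sum>i=1..n. r i)" using m(2) by simp
    show ?thesis
    proof
      assume eq: "(\<Sum>i=1..n. r i) = degree F"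
      obtain Q where Q: "F = Q \<star> L" using un assms(6) by (auto simp: right_dvd_def P_def)
      have Q0: "Q \<noteq> 0" using Q assms(5) by auto
      have "degree Q = 0" using degree_mul[OF Q0 L0] Q eq dL by simp
      then obtain c where c: "Q = [:c:]" by (elim degree_eq_zeroE) 
      thus "\<exists>c. c \<noteq> 0 \<and> F = [:c:] \<star> L" using Q Q0 by auto
    next
      assume "\<exists>c. c \<noteq> 0 \<and> F = [:c:] \<star> L"
      then obtain c where c: "c \<noteq> 0" "F = [:c:] \<star> L" by blast
      thus "(\<Sum>i=1..n. r i) = degree F" using degree_mul[of "[:c:]" L] L0 dL by simp
    qed
  qed
  show ?thesis using part1 part2 part3 unfolding P_def by blast
qed

end
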